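(* In the setting described in the context, let $\mathcal{J},\mathcal{J}'\subseteq\mathcal{I}$ be arbitrary, and put $\mathcal{J}_\cup=\mathcal{J}\cup\mathcal{J}'$, $\mathcal{J}_\cap=\mathcal{J}\cap\mathcal{J}'$. Then $$ \operatorname{Cov}(\mathbf{c}_{\mathcal{J}},\mathbf{c}_{\mathcal{J}'}) \;=\; \sum_{\mathcal{S}\subseteq\mathcal{J}_\cup} t_{\mathcal{S}}\,(q-p)^{|\mathcal{S}|}\,p^{|\mathcal{J}_\cup|-|\mathcal{S}|}\Big(1-(q+p)^{|\mathcal{S}\cap\mathcal{J}_\cap|}\,p^{|\mathcal{J}_\cap|-|\mathcal{S}\cap\mathcal{J}_\cap|}\Big), $$ with $t_\emptyset=N$.
   Context: Setting: Let $N\ge 1$, let $\mathcal{I}$ be a finite set of column indices, and let $X\in\{0,1\}^{N\times\mathcal{I}}$ be a fixed (ground-truth) binary matrix with rows $n=1,\dots,N$. Fix probabilities $0\le p<q\le 1$. The perturbed ("evidence") matrix $\hat{X}$ is a random matrix in $\{0,1\}^{N\times\mathcal{I}}$ whose entries are mutually independent, with $\hat X_{ni}\sim\mathrm{Bernoulli}(q)$ if $X_{ni}=1$ and $\hat X_{ni}\sim\mathrm{Bernoulli}(p)$ if $X_{ni}=0$. For $\mathcal{S}\subseteq\mathcal{I}$ define the true co-occurrence count $t_{\mathcal{S}}=\#\{n : X_{ni}=1 \text{ for all } i\in\mathcal{S}\}$ (so $t_\emptyset=N$) and the perturbed co-occurrence count $\mathbf{c}_{\mathcal{S}}=\sum_{n=1}^N\prod_{i\in\mathcal{S}}\hat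 X_{ni}$ (so $\mathbf{c}_\emptyset=N$). *)

theory Defs
  imports "HOL-Probability.Probability"
begin

definition pmf_covariance :: "'a pmf \<Rightarrow> ('a \<Rightarrow> real) \<Rightarrow> ('a \<Rightarrow> real) \<Rightarrow> real" where
  "pmf_covariance M f g =
     measure_pmf.expectation M (\<lambda>x. (f x - measure_pmf.expectation M f) *
                                    (g x - measure_pmf.expectation M g))"

text \<open>Distribution of the perturbed (evidence) matrix: rows 1..N, columns I; entries
  independent, Bernoulli(q) where the ground truth X is 1 (True), Bernoulli(p) where it is 0.
  Entries outside {1..N} x I are fixed to False (irrelevant).\<close>
definition evidence_pmf ::
  "nat \<Rightarrow> 'i set \<Rightarrow> (nat \<Rightarrow> 'i \<Rightarrow> bool) \<Rightarrow> real \<Rightarrow> real \<Rightarrow> (nat \<times> 'i \<Rightarrow> bool) pmf" where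
  "evidence_pmf N I X p q =
     Pi_pmf ({1..N} \<times> I) False (\<lambda>(n, i). bernoulli_pmf (if X n i then q else p))"

definition true_count :: "nat \<Rightarrow> (nat \<Rightarrow> 'i \<Rightarrow> bool) \<Rightarrow> 'i set \<Rightarrow> nat" where
  "true_count N X S = card {n \<in> {1..N}. \<forall>i\<in>S. X n i}"

definition pert_count :: "nat \<Rightarrow> 'i set \<Rightarrow> (nat \<times> 'i \<Rightarrow> bool) \<Rightarrow> real" where
  "pert_count N S Xh = (\<Sum>n = 1..N. \<Prod>i\<in>S. (if Xh (n, i) then 1 else 0))"

end

theory Submission imports Defs begin

lemma prod_ind:
  assumes "finite K"
  shows "(\<Prod>x\<in>K. (if P x then 1 else 0::real)) = (if \<forall>x\<in>K. P x then 1 else 0)"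
  using assms by (induction K rule: finite_induct) auto

lemma prod_ind_c:
  assumes "finite K"
  shows "(\<Prod>x\<in>K. (if P x then c else 0::real)) = (if \<forall>x\<in>K. P x then c ^ card K else 0)"
  using assms by (induction K rule: finite_induct) auto

lemma prod_pair: "(\<Prod>x\<in>{n}\<times>K. g x) = (\<Prod>i\<in>K. g (n, i))"
proof -
  have "{n}\<times>K = Pair n ` K" by auto
  then show ?thesis by (simp add: prod.reindex inj_on_def)
qed

lemma fin_ev: assumes "finite I" shows "finite (set_pmf (evidence_pmf N I X p q))"
proof -
  have "set_pmf (evidence_pmf N I X p q) \<subseteq> PiE_dflt ({1..N} \<times> I) False
     (set_pmf \<circ> (\<lambda>(n, i). bernoulli_pmf (if X n i then q else p)))"
    unfolding evidence_pmf_def by (rule set_Pi_pmf_subset') (use assms in auto)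
  moreover have "finite (PiE_dflt ({1..N} \<times> I) False
     (set_pmf \<circ> (\<lambda>(n, i). bernoulli_pmf (if X n i then q else p))))"
    by (rule finite_PiE_dflt) (use assms in auto)
  ultimately show ?thesis by (rule finite_subset)
qed

lemma E_ind:
  assumes "finite I" "0 \<le> p" "p \<le> q" "q \<le> 1" "K \<subseteq> {1..N} \<times> I"
  shows "measure_pmf.expectation (evidence_pmf N I X p q) (\<lambda>y. if \<forall>x\<in>K. y x then 1 else 0)
     = (\<Prod>x\<in>K. (\<lambda>(n,i). if X n i then q else p) x)"
proof -
  let ?A = "{1..N} \<times> I"
  let ?f = "\<lambda>x b. if x \<in> K then (if b then 1 else 0) else (1::real)"
  have finA: "finite ?A" using assms by auto
  have finK: "finite K" using assms finA finite_subset by blast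
  have eq: "(\<lambda>y. if \<forall>x\<in>K. y x then 1 else 0) = (\<lambda>y. \<Prod>x\<in>?A. ?f x (y x))"
  proof
    fix y :: "nat \<times> _ \<Rightarrow> bool"
    have "(\<Prod>x\<in>?A. ?f x (y x)) = (\<Prod>x\<in>?A \<inter> K. (if y x then 1 else 0))"
      by (rule prod.inter_restrict[OF finA, symmetric])
    also have "?A \<inter> K = K" using assms by auto
    finally show "(if \<forall>x\<in>K. y x then 1 else 0) = (\<Prod>x\<in>?A. ?f x (y x))"
      using prod_ind[OF finK] by simp
  qed
  have pq: "\<And>n i. 0 \<le> (if X n i then q else p) \<and> (if X n i then q else p) \<le> 1" using assms by auto
  have "measure_pmf.expectation (evidence_pmf N I X p q) (\<lambda>y. \<Prod>x\<in>?A. ?f x (y x))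
     = (\<Prod>x\<in>?A. measure_pmf.expectation ((\<lambda>(n, i). bernoulli_pmf (if X n i then q else p)) x) (?f x))"
    unfolding evidence_pmf_def
    by (rule expectation_prod_Pi_pmf) (use finA in \<open>auto intro!: integrable_measure_pmf_finite\<close>)
  also have "\<dots> = (\<Prod>x\<in>?A. if x \<in> K then (\<lambda>(n,i). if X n i then q else p) x else 1)"
    by (rule prod.cong) (use pq in \<open>auto split: prod.splits\<close>)
  also have "\<dots> = (\<Prod>x\<in>?A \<inter> K. (\<lambda>(n,i). if X n i then q else p) x)"
    by (rule prod.inter_restrict[OF finA, symmetric])
  also have "?A \<inter> K = K" using assms by auto
  finally show ?thesis using eq by simp
qed

lemma cov_expand:
  fixes M :: "'a pmf"
  assumes "finite (set_pmf M)"
  shows "pmf_covariance M f g = measure_pmf.expectation M (\<lambda>x. f x * g x)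
     - measure_pmf.expectation M f * measure_pmf.expectation M g"
proof -
  let ?a = "measure_pmf.expectation M f" and ?b = "measure_pmf.expectation M g"
  have int: "\<And>h::'a\<Rightarrow>real. integrable M h" using assms by (rule integrable_measure_pmf_finite)
  have "(\<lambda>x. (f x - ?a) * (g x - ?b)) = (\<lambda>x. f x * g x - (?a * g x + ?b * f x) + ?a * ?b)"
    by (auto simp: algebra_simps)
  then have "pmf_covariance M f g = measure_pmf.expectation M (\<lambda>x. f x * g x - (?a * g x + ?b * f x) + ?a * ?b)"
    unfolding pmf_covariance_def by simp
  also have "\<dots> = measure_pmf.expectation M (\<lambda>x. f x * g x) - (?a * ?b + ?b * ?a) + ?a * ?b"
    by (simp add: int Bochner_Integration.integral_diff Bochner_Integration.integral_add)
  finally show ?thesis by simp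
qed

lemma pert_count_ind:
  assumes "finite J"
  shows "pert_count N J y = (\<Sum>n=1..N. if \<forall>x\<in>{n}\<times>J. y x then 1 else 0)"
  unfolding pert_count_def
  by (rule sum.cong) (auto simp: prod_ind[OF assms])

lemma comb:
  fixes U C :: "'i set" and A :: "'i \<Rightarrow> bool" and p q :: real
  assumes "finite U" "C \<subseteq> U"
  shows "(\<Sum>S\<in>Pow U. (if \<forall>i\<in>S. A i then 1 else 0) * ((q - p) ^ card S * p ^ (card U - card S) *
        (1 - (q + p) ^ card (S \<inter> C) * p ^ (card C - card (S \<inter> C)))))
      = (\<Prod>i\<in>U. if A i then q else p) - (\<Prod>i\<in>U. if A i then q else p) * (\<Prod>i\<in>C. if A i then q else p)"
proof -
  have finC: "finite C" using assms finite_subset by blast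
  have e1: "(\<Prod>i\<in>U. if A i then q else p) = (\<Sum>S\<in>Pow U. (if \<forall>i\<in>S. A i then 1 else 0) * ((q - p) ^ card S * p ^ (card U - card S)))"
  proof -
    have "(\<Prod>i\<in>U. if A i then q else p) = (\<Prod>i\<in>U. (if A i then q - p else 0) + p)"
      by (rule prod.cong) auto
    also have "\<dots> = (\<Sum>S\<in>Pow U. (\<Prod>i\<in>S. (if A i then q - p else 0)) * (\<Prod>i\<in>U - S. p))"
      by (rule prod_add[OF assms(1)])
    also have "\<dots> = (\<Sum>S\<in>Pow U. (if \<forall>i\<in>S. A i then 1 else 0) * ((q - p) ^ card S * p ^ (card U - card S)))"
    proof (rule sum.cong)
      fix S assume "S \<in> Pow U"
      then have "S \<subseteq> U" "finite S" using assms finite_subset by auto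
      then show "(\<Prod>i\<in>S. (if A i then q - p else 0)) * (\<Prod>i\<in>U - S. p) = (if \<forall>i\<in>S. A i then 1 else 0) * ((q - p) ^ card S * p ^ (card U - card S))"
        by (simp add: prod_ind_c card_Diff_subset)
    qed simp
    finally show ?thesis .
  qed
  have e2: "(\<Prod>i\<in>U. if A i then q else p) * (\<Prod>i\<in>C. if A i then q else p) = (\<Sum>S\<in>Pow U. (if \<forall>i\<in>S. A i then 1 else 0) * ((q - p) ^ card S * p ^ (card U - card S) *
        ((q + p) ^ card (S \<inter> C) * p ^ (card C - card (S \<inter> C)))))"
  proof -
    have "(\<Prod>i\<in>U. if A i then q else p) * (\<Prod>i\<in>C. if A i then q else p)
        = (\<Prod>i\<in>U. (if A i then q else p) * (if i \<in> C then (if A i then q else p) else 1))"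
      by (simp add: prod.distrib prod.inter_restrict[OF assms(1), symmetric] Int_absorb1[OF assms(2)])
    also have "\<dots> = (\<Prod>i\<in>U. (if A i then q - p else 0) * (if i \<in> C then q + p else 1) + p * (if i \<in> C then p else 1))"
      by (rule prod.cong) (auto simp: algebra_simps power2_eq_square)
    also have "\<dots> = (\<Sum>S\<in>Pow U. (\<Prod>i\<in>S. (if A i then q - p else 0) * (if i \<in> C then q + p else 1)) * (\<Prod>i\<in>U - S. p * (if i \<in> C then p else 1)))"
      by (rule prod_add[OF assms(1)])
    also have "\<dots> = (\<Sum>S\<in>Pow U. (if \<forall>i\<in>S. A i then 1 else 0) * ((q - p) ^ card S * p ^ (card U - card S) *
        ((q + p) ^ card (S \<inter> C) * p ^ (card C - card (S \<inter> C)))))"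
    proof (rule sum.cong)
      fix S assume "S \<in> Pow U"
      then have SU: "S \<subseteq> U" and fS: "finite S" using assms finite_subset by auto
      have a: "(\<Prod>i\<in>S. (if A i then q - p else 0) * (if i \<in> C then q + p else 1))
          = (if \<forall>i\<in>S. A i then 1 else 0) * (q - p) ^ card S * (q + p) ^ card (S \<inter> C)"
        by (simp add: prod.distrib prod_ind_c[OF fS] prod.inter_restrict[OF fS, symmetric])
      have "(U - S) \<inter> C = C - S \<inter> C" using assms by auto
      then have c: "card ((U - S) \<inter> C) = card C - card (S \<inter> C)"
        using finC by (simp add: card_Diff_subset)
      have b: "(\<Prod>i\<in>U - S. p * (if i \<in> C then p else 1)) = p ^ (card U - card S) * p ^ (card C - card (S \<inter> C))"
        using assms SU fS c
        by (simp add: prod.distrib prod.inter_restrict[symmetric] card_Diff_subset)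
      show "(\<Prod>i\<in>S. (if A i then q - p else 0) * (if i \<in> C then q + p else 1)) * (\<Prod>i\<in>U - S. p * (if i \<in> C then p else 1)) = (if \<forall>i\<in>S. A i then 1 else 0) * ((q - p) ^ card S * p ^ (card U - card S) *
        ((q + p) ^ card (S \<inter> C) * p ^ (card C - card (S \<inter> C))))"
        unfolding a b by simp
    qed simp
    finally show ?thesis .
  qed
  have "(\<Sum>S\<in>Pow U. (if \<forall>i\<in>S. A i then 1 else 0) * ((q - p) ^ card S * p ^ (card U - card S) *
        (1 - (q + p) ^ card (S \<inter> C) * p ^ (card C - card (S \<inter> C)))))
     = (\<Sum>S\<in>Pow U. (if \<forall>i\<in>S. A i then 1 else 0) * ((q - p) ^ card S * p ^ (card U - card S)))
      - (\<Sum>S\<in>Pow U. (if \<forall>i\<in>S. A i then 1 else 0) * ((q - p) ^ card S * p ^ (card U - card S) *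
        ((q + p) ^ card (S \<inter> C) * p ^ (card C - card (S \<inter> C)))))"
    by (simp add: sum_subtractf[symmetric] algebra_simps)
  then show ?thesis using e1 e2 by simp
qed

theorem theorem3:
  fixes N :: nat and I J J' :: "'i set" and X :: "nat \<Rightarrow> 'i \<Rightarrow> bool" and p q :: real
  assumes "N \<ge> 1" and "finite I"
    and "0 \<le> p" and "p < q" and "q \<le> 1"
    and "J \<subseteq> I" and "J' \<subseteq> I"
  shows "pmf_covariance (evidence_pmf N I X p q) (pert_count N J) (pert_count N J') =
    (\<Sum>S\<in>Pow (J \<union> J').
        real (true_count N X S) * (q - p) ^ card S * p ^ (card (J \<union> J') - card S) *
        (1 - (q + p) ^ card (S \<inter> (J \<inter> J')) * p ^ (card (J \<inter> J') - card (S \<inter> (J \<inter> J')))))"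
proof -
  define M where "M = evidence_pmf N I X p q"
  define R where "R = (\<lambda>n i. if X n i then q else p)"
  define P where "P = (\<lambda>n K. \<Prod>i\<in>K. R n i)"
  define ind where "ind = (\<lambda>K (y::nat \<times> 'i \<Rightarrow> bool). if \<forall>x\<in>K. y x then 1 else (0::real))"
  have fJ: "finite J" and fJ': "finite J'" using assms finite_subset by auto
  have fin: "finite (set_pmf M)" unfolding M_def by (rule fin_ev[OF assms(2)])
  have int: "\<And>h::_\<Rightarrow>real. integrable M h" using fin by (rule integrable_measure_pmf_finite)
  have Eind: "measure_pmf.expectation M (ind K) = (\<Prod>x\<in>K. R (fst x) (snd x))"
    if "K \<subseteq> {1..N} \<times> I" for K
    unfolding M_def ind_def using E_ind[OF assms(2) assms(3) _ assms(5) that, of X] assms(4)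
    by (simp add: R_def case_prod_beta')
  have Esq: "measure_pmf.expectation M (ind ({n}\<times>K)) = P n K" if "n \<in> {1..N}" "K \<subseteq> I" for n K
  proof -
    have "{n} \<times> K \<subseteq> {1..N} \<times> I" using that by auto
    then show ?thesis using Eind[of "{n}\<times>K"] by (simp add: P_def prod_pair)
  qed
  have pc: "\<And>K. finite K \<Longrightarrow> pert_count N K = (\<lambda>y. \<Sum>n=1..N. ind ({n}\<times>K) y)"
    using pert_count_ind unfolding ind_def by blast
  have EF: "measure_pmf.expectation M (pert_count N K) = (\<Sum>n=1..N. P n K)" if "K \<subseteq> I" for K
  proof -
    have "finite K" using that assms(2) finite_subset by blast
    then have "measure_pmf.expectation M (pert_count N K) = (\<Sum>n=1..N. measure_pmf.expectation M (ind ({n}\<times>K)))"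
      by (simp add: pc Bochner_Integration.integral_sum int)
    also have "\<dots> = (\<Sum>n=1..N. P n K)" using Esq that by (intro sum.cong) auto
    finally show ?thesis .
  qed
  have prodFG: "pert_count N J y * pert_count N J' y = (\<Sum>n=1..N. \<Sum>m=1..N. ind ({n}\<times>J \<union> {m}\<times>J') y)" for y
    unfolding pc[OF fJ] pc[OF fJ'] sum_product
    by (intro sum.cong refl) (auto simp: ind_def)
  have cross: "measure_pmf.expectation M (ind ({n}\<times>J \<union> {m}\<times>J')) =
      (if n = m then P n (J \<union> J') else P n J * P m J')" if "n \<in> {1..N}" "m \<in> {1..N}" for n m
  proof (cases "n = m")
    case True
    then have "{n}\<times>J \<union> {m}\<times>J' = {n}\<times>(J \<union> J')" by auto
    then show ?thesis using Esq[of n "J \<union> J'"] that assms True by auto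
  next
    case False
    have sub: "{n}\<times>J \<union> {m}\<times>J' \<subseteq> {1..N} \<times> I" using that assms by auto
    have "(\<Prod>x\<in>{n}\<times>J \<union> {m}\<times>J'. R (fst x) (snd x)) = (\<Prod>x\<in>{n}\<times>J. R (fst x) (snd x)) * (\<Prod>x\<in>{m}\<times>J'. R (fst x) (snd x))"
      by (rule prod.union_disjoint) (use fJ fJ' False in auto)
    then show ?thesis using Eind[OF sub] False by (simp add: prod_pair P_def)
  qed
  have EFG: "measure_pmf.expectation M (\<lambda>y. pert_count N J y * pert_count N J' y)
     = (\<Sum>n=1..N. \<Sum>m=1..N. if n = m then P n (J \<union> J') else P n J * P m J')"
  proof -
    have "measure_pmf.expectation M (\<lambda>y. pert_count N J y * pert_count N J' y)
       = (\<Sum>n=1..N. \<Sum>m=1..N. measure_pmf.expectation M (ind ({n}\<times>J \<union> {m}\<times>J')))"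
      by (simp add: prodFG Bochner_Integration.integral_sum int)
    also have "\<dots> = (\<Sum>n=1..N. \<Sum>m=1..N. if n = m then P n (J \<union> J') else P n J * P m J')"
      using cross by (intro sum.cong) auto
    finally show ?thesis .
  qed
  have LHS: "pmf_covariance M (pert_count N J) (pert_count N J') = (\<Sum>n=1..N. P n (J \<union> J') - P n J * P n J')"
  proof -
    have "pmf_covariance M (pert_count N J) (pert_count N J')
       = (\<Sum>n=1..N. \<Sum>m=1..N. if n = m then P n (J \<union> J') else P n J * P m J') - (\<Sum>n=1..N. P n J) * (\<Sum>m=1..N. P m J')"
      using cov_expand[OF fin] EFG EF assms by simp
    also have "\<dots> = (\<Sum>n=1..N. \<Sum>m=1..N. (if n = m then P n (J \<union> J') else P n J * P m J') - P n J * P m J')"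
      by (simp add: sum_product sum_subtractf)
    also have "\<dots> = (\<Sum>n=1..N. \<Sum>m=1..N. if m = n then P n (J \<union> J') - P n J * P n J' else 0)"
      by (intro sum.cong) auto
    also have "\<dots> = (\<Sum>n=1..N. P n (J \<union> J') - P n J * P n J')"
      by (intro sum.cong) auto
    finally show ?thesis .
  qed
  have tc: "real (true_count N X S) = (\<Sum>n=1..N. if \<forall>i\<in>S. X n i then 1 else 0)" for S
  proof -
    have "{n \<in> {1..N}. \<forall>i\<in>S. X n i} = {1..N} \<inter> {n. \<forall>i\<in>S. X n i}" by auto
    then show ?thesis unfolding true_count_def by (simp add: sum.If_cases)
  qed
  have fU: "finite (J \<union> J')" using fJ fJ' by auto
  have rowid: "P n (J \<union> J') * P n (J \<inter> J') = P n J * P n J'" for n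
    unfolding P_def by (rule prod.union_inter[OF fJ fJ'])
  have "(\<Sum>S\<in>Pow (J \<union> J').
        real (true_count N X S) * (q - p) ^ card S * p ^ (card (J \<union> J') - card S) *
        (1 - (q + p) ^ card (S \<inter> (J \<inter> J')) * p ^ (card (J \<inter> J') - card (S \<inter> (J \<inter> J')))))
     = (\<Sum>n=1..N. \<Sum>S\<in>Pow (J \<union> J'). (if \<forall>i\<in>S. X n i then 1 else 0) * ((q - p) ^ card S * p ^ (card (J \<union> J') - card S) *
        (1 - (q + p) ^ card (S \<inter> (J \<inter> J')) * p ^ (card (J \<inter> J') - card (S \<inter> (J \<inter> J'))))))"
    by (simp add: tc sum_distrib_right mult.assoc sum.swap[of _ "Pow _"])
  also have "\<dots> = (\<Sum>n=1..N. P n (J \<union> J') - P n (J \<union> J') * P n (J \<inter> J'))"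
    unfolding P_def R_def by (intro sum.cong refl comb fU) auto
  also have "\<dots> = (\<Sum>n=1..N. P n (J \<union> J') - P n J * P n J')"
    using rowid by simp
  finally show ?thesis using LHS unfolding M_def by simp
qed

end
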